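(* Let $\mathcal{G}=(G,\Pi,T,s_0)$ be a game and let $t\in\mathbb{Q}\cap[0,1]$ be a threshold. If there is a collective strategy $\bar\sigma_\Pi$ such that for every strategy $\sigma_{\mathsf O}$ of the opponent the set $T$ is reached from $s_0$ with probability strictly greater than $t$, then there is a memoryless collective strategy with the same property.
   Context: A game structure is $G=(\Sigma,S,(A_p)_{p\in\Sigma},(\mathsf{Av}_p)_{p\in\Sigma},\delta)$ with a set $\Sigma$ of players, a finite set $S$ of states, finite action sets $A_p$, nonempty sets $\mathsf{Av}_p(s)\subseteq A_p$ of actions available to $p$ at $s$, and a transition function $\delta$ mapping each state $s$ and each action profile $(a_p)_{p\in\Sigma}$ with $a_p\in\mathsf{Av}_p(s)$ to a probability distribution $\delta(s,(a_p)_p)$ on $S$. A game is $\mathcal G=(G,\Pi,T,s_0)$ with a team $\Pi\subseteq\Sigma$, target set $T\subseteq S$ assumed absorbing (every action profile at $t\in T$ leads to $t$ with probability 1), and initial state $s_0$. Throughout, $\Sigma\setminus\Pi=\{\mathsf O\}$ is a single player, the opponent. A history is a nonempty finite word over $S$, a play an infinite one. A strategy for player $p$ maps each history $hs$ (last state $s$) to a probability distribution over $\mathsf{Av}_p(s)$; it is memoryless if its value depends only on the last state. A collective strategy is a tuple $\bar\sigma_\Pi=(\sigma_p)_{p\in\Pi}$ of strategies, one per team player; the team players randomise independently, i.e. at history $h$ the joint action $(a_p)_{p\in\Pi}$ is chosen with probability $\prod_{p\in\Pi}\sigma_p(h)(a_p)$. A complete profile $\bar\sigma$ induces a probability measure on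 plays starting at $s_0$ where from history $hs$ the next state is $s'$ with probability $\sum_{\bar a}\bar\sigma(hs)(\bar a)\,\delta(s,\bar a)(s')$, $\bar a$ ranging over available action profiles and $\bar\sigma(hs)(\bar a)=\prod_{p\in\Sigma}\sigma_p(hs)(a_p)$. A collective strategy is memoryless if each component is. *)

theory Defs
  imports "HOL-Probability.Probability"
begin

(* An action profile is a function 'p => 'a (only its values on Sigma matter;
   we use extensional functions from PiE).  delta s a is a distribution on states. *)

definition game_structure ::
  "'p set \<Rightarrow> 's set \<Rightarrow> ('p \<Rightarrow> 's \<Rightarrow> 'a set) \<Rightarrow> ('s \<Rightarrow> ('p \<Rightarrow> 'a) \<Rightarrow> 's pmf) \<Rightarrow> bool" where
  "game_structure Sig S Av \<delta> \<longleftrightarrow>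
     finite Sig \<and> finite S \<and>
     (\<forall>p\<in>Sig. \<forall>s\<in>S. finite (Av p s) \<and> Av p s \<noteq> {}) \<and>
     (\<forall>s\<in>S. \<forall>a\<in>(\<Pi>\<^sub>E p\<in>Sig. Av p s). set_pmf (\<delta> s a) \<subseteq> S)"

definition histories :: "'s set \<Rightarrow> 's list set" where
  "histories S = {h. h \<noteq> [] \<and> set h \<subseteq> S}"

definition strategy :: "'s set \<Rightarrow> ('p \<Rightarrow> 's \<Rightarrow> 'a set) \<Rightarrow> 'p \<Rightarrow> ('s list \<Rightarrow> 'a pmf) \<Rightarrow> bool" where
  "strategy S Av p \<sigma> \<longleftrightarrow> (\<forall>h\<in>histories S. set_pmf (\<sigma> h) \<subseteq> Av p (last h))"

definition memoryless :: "'s set \<Rightarrow> ('s list \<Rightarrow> 'a pmf) \<Rightarrow> bool" where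
  "memoryless S \<sigma> \<longleftrightarrow>
     (\<forall>h\<in>histories S. \<forall>h'\<in>histories S. last h = last h' \<longrightarrow> \<sigma> h = \<sigma> h')"

definition collective_strategy ::
  "'s set \<Rightarrow> ('p \<Rightarrow> 's \<Rightarrow> 'a set) \<Rightarrow> 'p set \<Rightarrow> ('p \<Rightarrow> 's list \<Rightarrow> 'a pmf) \<Rightarrow> bool" where
  "collective_strategy S Av Team \<sigma> \<longleftrightarrow> (\<forall>p\<in>Team. strategy S Av p (\<sigma> p))"

definition memoryless_collective :: "'s set \<Rightarrow> 'p set \<Rightarrow> ('p \<Rightarrow> 's list \<Rightarrow> 'a pmf) \<Rightarrow> bool" where
  "memoryless_collective S Team \<sigma> \<longleftrightarrow> (\<forall>p\<in>Team. memoryless S (\<sigma> p))"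

definition combine :: "'p \<Rightarrow> ('p \<Rightarrow> 's list \<Rightarrow> 'a pmf) \<Rightarrow> ('s list \<Rightarrow> 'a pmf) \<Rightarrow> 'p \<Rightarrow> 's list \<Rightarrow> 'a pmf" where
  "combine Opp \<sigma> \<sigma>O = (\<lambda>p. if p = Opp then \<sigma>O else \<sigma> p)"

definition next_prob ::
  "'p set \<Rightarrow> ('p \<Rightarrow> 's \<Rightarrow> 'a set) \<Rightarrow> ('s \<Rightarrow> ('p \<Rightarrow> 'a) \<Rightarrow> 's pmf) \<Rightarrow>
   ('p \<Rightarrow> 's list \<Rightarrow> 'a pmf) \<Rightarrow> 's list \<Rightarrow> 's \<Rightarrow> real" where
  "next_prob Sig Av \<delta> \<sigma> h s' =
     (\<Sum>a\<in>(\<Pi>\<^sub>E p\<in>Sig. Av p (last h)).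
        (\<Prod>p\<in>Sig. pmf (\<sigma> p h) (a p)) * pmf (\<delta> (last h) a) s')"

(* probability, under the induced measure on plays extending history h,
   that T is visited within the next n steps (or already at last h) *)
fun reach_within ::
  "'p set \<Rightarrow> 's set \<Rightarrow> ('p \<Rightarrow> 's \<Rightarrow> 'a set) \<Rightarrow> ('s \<Rightarrow> ('p \<Rightarrow> 'a) \<Rightarrow> 's pmf) \<Rightarrow> 's set \<Rightarrow>
   ('p \<Rightarrow> 's list \<Rightarrow> 'a pmf) \<Rightarrow> nat \<Rightarrow> 's list \<Rightarrow> real" where
  "reach_within Sig S Av \<delta> T \<sigma> 0 h = (if last h \<in> T then 1 else 0)"
| "reach_within Sig S Av \<delta> T \<sigma> (Suc n) h =
     (if last h \<in> T then 1 else
        (\<Sum>s'\<in>S. next_prob Sig Av \<delta> \<sigma> h s' * reach_within Sig S Av \<delta> T \<sigma> n (h @ [s'])))"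

(* probability of reaching T from s0: the measure of the event "eventually T"
   is the limit (= supremum, the sequence being nondecreasing) of the
   probabilities of reaching T within n steps *)
definition reach_prob ::
  "'p set \<Rightarrow> 's set \<Rightarrow> ('p \<Rightarrow> 's \<Rightarrow> 'a set) \<Rightarrow> ('s \<Rightarrow> ('p \<Rightarrow> 'a) \<Rightarrow> 's pmf) \<Rightarrow> 's set \<Rightarrow>
   ('p \<Rightarrow> 's list \<Rightarrow> 'a pmf) \<Rightarrow> 's \<Rightarrow> real" where
  "reach_prob Sig S Av \<delta> T \<sigma> s0 = (SUP n. reach_within Sig S Av \<delta> T \<sigma> n [s0])"

definition absorbing ::
  "'p set \<Rightarrow> ('p \<Rightarrow> 's \<Rightarrow> 'a set) \<Rightarrow> ('s \<Rightarrow> ('p \<Rightarrow> 'a) \<Rightarrow> 's pmf) \<Rightarrow> 's set \<Rightarrow> bool" where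
  "absorbing Sig Av \<delta> T \<longleftrightarrow>
     (\<forall>t\<in>T. \<forall>a\<in>(\<Pi>\<^sub>E p\<in>Sig. Av p t). \<delta> t a = return_pmf t)"

end

theory Submission imports Defs begin

locale gm =
  fixes Sig Team :: "'p set" and S T :: "'s set" and Av :: "'p \<Rightarrow> 's \<Rightarrow> 'a set"
    and \<delta> :: "'s \<Rightarrow> ('p \<Rightarrow> 'a) \<Rightarrow> 's pmf" and Opp :: 'p
  assumes gs: "game_structure Sig S Av \<delta>" and TS: "Team \<subseteq> Sig" and OppD: "Sig - Team = {Opp}"
    and TsubS: "T \<subseteq> S"
begin

lemma finSig: "finite Sig" and finS: "finite S"
  and finAv: "p \<in> Sig \<Longrightarrow> s \<in> S \<Longrightarrow> finite (Av p s)"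
  and neAv: "p \<in> Sig \<Longrightarrow> s \<in> S \<Longrightarrow> Av p s \<noteq> {}"
  and supp: "s \<in> S \<Longrightarrow> a \<in> (\<Pi>\<^sub>E p\<in>Sig. Av p s) \<Longrightarrow> set_pmf (\<delta> s a) \<subseteq> S"
  using gs unfolding game_structure_def by auto

lemma OppSig: "Opp \<in> Sig" and OppT: "Opp \<notin> Team" and SigTeam: "p \<in> Sig \<Longrightarrow> p \<noteq> Opp \<Longrightarrow> p \<in> Team"
  using OppD by auto

definition valid :: "('p \<Rightarrow> 's list \<Rightarrow> 'a pmf) \<Rightarrow> 's list \<Rightarrow> bool" where
  "valid \<rho> h \<longleftrightarrow> (\<forall>p\<in>Sig. set_pmf (\<rho> p h) \<subseteq> Av p (last h))"

lemma hist_last: "h \<in> histories S \<Longrightarrow> last h \<in> S"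
  unfolding histories_def by auto

lemma hist_snoc: "h \<in> histories S \<Longrightarrow> s' \<in> S \<Longrightarrow> h @ [s'] \<in> histories S"
  unfolding histories_def by auto

lemma np_nonneg: "0 \<le> next_prob Sig Av \<delta> \<rho> h s'"
  unfolding next_prob_def by (intro sum_nonneg mult_nonneg_nonneg prod_nonneg) auto

lemma np_sum:
  assumes "last h \<in> S" "valid \<rho> h"
  shows "(\<Sum>s'\<in>S. next_prob Sig Av \<delta> \<rho> h s') = 1"
proof -
  let ?s = "last h"
  have "(\<Sum>s'\<in>S. next_prob Sig Av \<delta> \<rho> h s') =
     (\<Sum>a\<in>(\<Pi>\<^sub>E p\<in>Sig. Av p ?s). (\<Prod>p\<in>Sig. pmf (\<rho> p h) (a p)) * (\<Sum>s'\<in>S. pmf (\<delta> ?s a) s'))"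
    unfolding next_prob_def by (subst sum.swap) (simp add: sum_distrib_left)
  also have "\<dots> = (\<Sum>a\<in>(\<Pi>\<^sub>E p\<in>Sig. Av p ?s). (\<Prod>p\<in>Sig. pmf (\<rho> p h) (a p)))"
    by (intro sum.cong refl) (simp add: sum_pmf_eq_1[OF finS supp[OF assms(1)]])
  also have "\<dots> = (\<Prod>p\<in>Sig. \<Sum>x\<in>Av p ?s. pmf (\<rho> p h) x)"
    by (rule prod_sum_PiE[symmetric]) (use finSig finAv assms(1) in auto)
  also have "\<dots> = 1"
    using assms finAv by (intro prod.neutral ballI sum_pmf_eq_1) (auto simp: valid_def)
  finally show ?thesis .
qed

lemma np_cong:
  assumes "last h = last h'" "\<forall>p\<in>Sig. \<rho> p h = \<rho>' p h'"
  shows "next_prob Sig Av \<delta> \<rho> h s' = next_prob Sig Av \<delta> \<rho>' h' s'"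
  unfolding next_prob_def using assms by (intro sum.cong prod.cong refl arg_cong2[where f="(*)"]) auto

lemma prod_split:
  "(\<Prod>p\<in>Sig. pmf (combine Opp \<rho> X p h) (a p)) = pmf (X h) (a Opp) * (\<Prod>p\<in>Sig-{Opp}. pmf (\<rho> p h) (a p))"
  using OppSig finSig by (subst prod.remove[of _ Opp]) (auto simp: combine_def intro!: prod.cong)

lemma np_mix:
  assumes "set_pmf (\<sigma>O h) \<subseteq> Av Opp (last h)" "last h \<in> S"
  shows "next_prob Sig Av \<delta> (combine Opp \<rho> \<sigma>O) h s' =
    (\<Sum>b\<in>Av Opp (last h). pmf (\<sigma>O h) b * next_prob Sig Av \<delta> (combine Opp \<rho> (\<lambda>_. return_pmf b)) h s')"
proof -
  let ?s = "last h"
  let ?G = "\<lambda>a. (\<Prod>p\<in>Sig-{Opp}. pmf (\<rho> p h) (a p)) * pmf (\<delta> ?s a) s'"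
  have "(\<Sum>b\<in>Av Opp ?s. pmf (\<sigma>O h) b * next_prob Sig Av \<delta> (combine Opp \<rho> (\<lambda>_. return_pmf b)) h s')
     = (\<Sum>b\<in>Av Opp ?s. \<Sum>a\<in>(\<Pi>\<^sub>E p\<in>Sig. Av p ?s). pmf (\<sigma>O h) b * (indicator {a Opp} b * ?G a))"
    unfolding next_prob_def prod_split by (simp add: sum_distrib_left mult.assoc)
  also have "\<dots> = (\<Sum>a\<in>(\<Pi>\<^sub>E p\<in>Sig. Av p ?s). \<Sum>b\<in>Av Opp ?s. pmf (\<sigma>O h) b * (indicator {a Opp} b * ?G a))"
    by (rule sum.swap)
  also have "\<dots> = (\<Sum>a\<in>(\<Pi>\<^sub>E p\<in>Sig. Av p ?s). pmf (\<sigma>O h) (a Opp) * ?G a)"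
  proof (intro sum.cong refl)
    fix a assume a: "a \<in> (\<Pi>\<^sub>E p\<in>Sig. Av p ?s)"
    then have "a Opp \<in> Av Opp ?s" using OppSig by auto
    then show "(\<Sum>b\<in>Av Opp ?s. pmf (\<sigma>O h) b * (indicator {a Opp} b * ?G a)) = pmf (\<sigma>O h) (a Opp) * ?G a"
    proof -
      have eqb: "(\<lambda>b. pmf (\<sigma>O h) b * (indicator {a Opp} b * ?G a)) = (\<lambda>b. if b = a Opp then pmf (\<sigma>O h) b * ?G a else 0)"
        by (auto simp: fun_eq_iff indicator_def)
      then show ?thesis using finAv[OF OppSig assms(2)] \<open>a Opp \<in> Av Opp ?s\<close>
        by (subst eqb) (simp add: sum.delta)
    qed
  qed
  also have "\<dots> = next_prob Sig Av \<delta> (combine Opp \<rho> \<sigma>O) h s'"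
    unfolding next_prob_def prod_split by (simp add: mult.assoc)
  finally show ?thesis by simp
qed

end

lemma (in gm) R_bounds:
  assumes "\<forall>h\<in>histories S. valid \<rho> h" "h \<in> histories S"
  shows "0 \<le> reach_within Sig S Av \<delta> T \<rho> k h \<and> reach_within Sig S Av \<delta> T \<rho> k h \<le> 1"
  using assms(2)
proof (induction k arbitrary: h)
  case 0 then show ?case by simp
next
  case (Suc k)
  have l: "last h \<in> S" using Suc.prems hist_last by auto
  have "(\<Sum>s'\<in>S. next_prob Sig Av \<delta> \<rho> h s' * reach_within Sig S Av \<delta> T \<rho> k (h @ [s']))
      \<le> (\<Sum>s'\<in>S. next_prob Sig Av \<delta> \<rho> h s')"
    using Suc.IH hist_snoc[OF Suc.prems] np_nonneg
    by (intro sum_mono) (simp add: mult_left_le)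
  moreover have "0 \<le> (\<Sum>s'\<in>S. next_prob Sig Av \<delta> \<rho> h s' * reach_within Sig S Av \<delta> T \<rho> k (h @ [s']))"
    using Suc.IH hist_snoc[OF Suc.prems] np_nonneg
    by (intro sum_nonneg) simp
  moreover have "(\<Sum>s'\<in>S. next_prob Sig Av \<delta> \<rho> h s') = 1" using np_sum[OF l] assms(1) Suc.prems by blast
  ultimately show ?case by simp
qed

locale gm2 = gm Sig Team S T Av \<delta> Opp
  for Sig Team :: "'p set" and S T :: "'s set" and Av :: "'p \<Rightarrow> 's \<Rightarrow> 'a set"
    and \<delta> :: "'s \<Rightarrow> ('p \<Rightarrow> 'a) \<Rightarrow> 's pmf" and Opp :: 'p +
  fixes \<sigma> :: "'p \<Rightarrow> 's list \<Rightarrow> 'a pmf"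
  assumes cs: "collective_strategy S Av Team \<sigma>"
begin

lemma valid_ret:
  assumes "h \<in> histories S" "b \<in> Av Opp (last h)"
  shows "valid (combine Opp \<sigma> (\<lambda>_. return_pmf b)) h"
  using assms cs SigTeam unfolding valid_def combine_def collective_strategy_def strategy_def by auto

definition E :: "('s \<Rightarrow> real) \<Rightarrow> 's list \<Rightarrow> 'a \<Rightarrow> real" where
  "E w h b = (\<Sum>s'\<in>S. next_prob Sig Av \<delta> (combine Opp \<sigma> (\<lambda>_. return_pmf b)) h s' * w s')"

definition M :: "('s \<Rightarrow> real) \<Rightarrow> 's list \<Rightarrow> real" where
  "M w h = Min (E w h ` Av Opp (last h))"

definition Hs :: "'s \<Rightarrow> 's list set" where
  "Hs s = {h. h \<in> histories S \<and> last h = s}"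

definition Phi :: "('s \<Rightarrow> real) \<Rightarrow> 's \<Rightarrow> real" where
  "Phi w s = (SUP h\<in>Hs s. M w h)"

definition bnd :: "('s \<Rightarrow> real) \<Rightarrow> bool" where
  "bnd w \<longleftrightarrow> (\<forall>s\<in>S. 0 \<le> w s \<and> w s \<le> 1)"

lemma E_shift:
  assumes "h \<in> histories S" "b \<in> Av Opp (last h)" "\<forall>s'\<in>S. w s' \<le> w' s' + c"
  shows "E w h b \<le> E w' h b + c"
proof -
  have "E w h b \<le> (\<Sum>s'\<in>S. next_prob Sig Av \<delta> (combine Opp \<sigma> (\<lambda>_. return_pmf b)) h s' * (w' s' + c))"
    unfolding E_def using assms(3) np_nonneg by (intro sum_mono mult_left_mono) auto
  also have "\<dots> = E w' h b + c * (\<Sum>s'\<in>S. next_prob Sig Av \<delta> (combine Opp \<sigma> (\<lambda>_. return_pmf b)) h s')"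
    unfolding E_def by (simp add: algebra_simps sum.distrib sum_distrib_left)
  also have "\<dots> = E w' h b + c"
    using np_sum[OF hist_last[OF assms(1)] valid_ret[OF assms(1,2)]] by simp
  finally show ?thesis .
qed

lemma E_bnd:
  assumes "h \<in> histories S" "b \<in> Av Opp (last h)" "bnd w"
  shows "0 \<le> E w h b \<and> E w h b \<le> 1"
proof
  show "0 \<le> E w h b" unfolding E_def using assms(3) np_nonneg by (intro sum_nonneg) (auto simp: bnd_def)
  have "E w h b \<le> E (\<lambda>_. 0) h b + 1" using E_shift[OF assms(1,2), of w "\<lambda>_. 0" 1] assms(3) by (auto simp: bnd_def)
  then show "E w h b \<le> 1" by (simp add: E_def)
qed

lemma M_facts:
  assumes "h \<in> histories S"
  shows "\<And>b. b \<in> Av Opp (last h) \<Longrightarrow> M w h \<le> E w h b"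
    and "\<exists>b\<in>Av Opp (last h). M w h = E w h b"
proof -
  have f: "finite (E w h ` Av Opp (last h))" and ne: "E w h ` Av Opp (last h) \<noteq> {}"
    using finAv[OF OppSig hist_last[OF assms]] neAv[OF OppSig hist_last[OF assms]] by auto
  show "\<And>b. b \<in> Av Opp (last h) \<Longrightarrow> M w h \<le> E w h b" unfolding M_def using f by simp
  have "M w h \<in> E w h ` Av Opp (last h)" unfolding M_def using Min_in[OF f ne] .
  then show "\<exists>b\<in>Av Opp (last h). M w h = E w h b" by blast
qed

lemma M_shift:
  assumes "h \<in> histories S" "\<forall>s'\<in>S. w s' \<le> w' s' + c"
  shows "M w h \<le> M w' h + c"
proof -
  obtain b where b: "b \<in> Av Opp (last h)" "M w' h = E w' h b" using M_facts(2)[OF assms(1)] by blast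
  show ?thesis using M_facts(1)[OF assms(1) b(1), where w=w] E_shift[OF assms(1) b(1) assms(2)] b(2) by simp
qed

lemma M_bnd:
  assumes "h \<in> histories S" "bnd w"
  shows "0 \<le> M w h \<and> M w h \<le> 1"
  using M_facts[OF assms(1), where w=w] E_bnd[OF assms(1) _ assms(2)] by force

lemma Hs_ne: "s \<in> S \<Longrightarrow> [s] \<in> Hs s"
  unfolding Hs_def histories_def by auto

lemma Hs_hist: "h \<in> Hs s \<Longrightarrow> h \<in> histories S" and Hs_last: "h \<in> Hs s \<Longrightarrow> last h = s"
  unfolding Hs_def by auto

lemma Phi_bdd: "bnd w \<Longrightarrow> bdd_above (M w ` Hs s)"
  using M_bnd Hs_hist by (intro bdd_aboveI[of _ 1]) blast

lemma Phi_upper: "bnd w \<Longrightarrow> h \<in> Hs s \<Longrightarrow> M w h \<le> Phi w s"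
  unfolding Phi_def by (rule cSUP_upper[OF _ Phi_bdd])

lemma Phi_bnd: "s \<in> S \<Longrightarrow> bnd w \<Longrightarrow> 0 \<le> Phi w s \<and> Phi w s \<le> 1"
proof
  assume "s \<in> S" "bnd w"
  show "0 \<le> Phi w s" using Phi_upper[OF \<open>bnd w\<close> Hs_ne[OF \<open>s\<in>S\<close>]] M_bnd[OF Hs_hist[OF Hs_ne[OF \<open>s\<in>S\<close>]] \<open>bnd w\<close>]
    by linarith
  show "Phi w s \<le> 1" unfolding Phi_def
  proof (rule cSUP_least)
    show "Hs s \<noteq> {}" using Hs_ne[OF \<open>s\<in>S\<close>] by blast
    fix h assume "h \<in> Hs s"
    then show "M w h \<le> 1" using M_bnd[OF Hs_hist \<open>bnd w\<close>] by blast
  qed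
qed

lemma Phi_shift:
  assumes "s \<in> S" "bnd w'" "\<forall>s'\<in>S. w s' \<le> w' s' + c"
  shows "Phi w s \<le> Phi w' s + c"
  unfolding Phi_def[of w]
proof (rule cSUP_least)
  show "Hs s \<noteq> {}" using Hs_ne[OF assms(1)] by auto
  fix h assume h: "h \<in> Hs s"
  show "M w h \<le> Phi w' s + c" using M_shift[OF Hs_hist[OF h] assms(3)] Phi_upper[OF assms(2) h] by simp
qed

lemma Phi_approx:
  assumes "s \<in> S" "bnd w" "0 < \<eta>"
  shows "\<exists>h\<in>Hs s. Phi w s - \<eta> < M w h"
proof -
  have "Phi w s - \<eta> < Phi w s" using assms(3) by simp
  then show ?thesis unfolding Phi_def[of w s] using less_cSUP_iff[OF _ Phi_bdd[OF assms(2)]] Hs_ne[OF assms(1)]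
    by blast
qed


primrec V :: "nat \<Rightarrow> 's \<Rightarrow> real" where
  "V 0 s = (if s \<in> T then 1 else 0)"
| "V (Suc k) s = (if s \<in> T then 1 else Phi (V k) s)"

lemma V_bnd: "bnd (V k)"
proof (induction k)
  case 0 then show ?case by (simp add: bnd_def)
next
  case (Suc k)
  show ?case unfolding bnd_def
  proof
    fix s assume s: "s \<in> S"
    show "0 \<le> V (Suc k) s \<and> V (Suc k) s \<le> 1" using Phi_bnd[OF s Suc.IH] by simp
  qed
qed

lemma V_mono: "\<forall>s\<in>S. V k s \<le> V (Suc k) s"
proof (induction k)
  case 0 then show ?case using Phi_bnd[OF _ V_bnd[of 0]] by simp
next
  case (Suc k)
  show ?case
  proof
    fix s assume s: "s \<in> S"
    show "V (Suc k) s \<le> V (Suc (Suc k)) s"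
      using Phi_shift[OF s V_bnd[of "Suc k"], of "V k" 0] Suc.IH by simp
  qed
qed

lemma V_mono_le: "s \<in> S \<Longrightarrow> k \<le> k' \<Longrightarrow> V k s \<le> V k' s"
  using lift_Suc_mono_le[of "\<lambda>k. V k s"] V_mono by blast

definition Vinf :: "'s \<Rightarrow> real" where "Vinf s = (SUP k. V k s)"

lemma V_bdd: "s \<in> S \<Longrightarrow> bdd_above (range (\<lambda>k. V k s))"
  using V_bnd unfolding bnd_def by (intro bdd_aboveI[of _ 1]) blast

lemma V_le_Vinf: "s \<in> S \<Longrightarrow> V k s \<le> Vinf s"
  unfolding Vinf_def by (rule cSUP_upper[OF _ V_bdd]) auto

lemma Vinf_bnd: "bnd Vinf"
  unfolding bnd_def
proof
  fix s assume s: "s \<in> S"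
  have "0 \<le> V 0 s" by simp
  moreover have "Vinf s \<le> 1" unfolding Vinf_def using V_bnd s unfolding bnd_def by (intro cSUP_least) auto
  ultimately show "0 \<le> Vinf s \<and> Vinf s \<le> 1" using V_le_Vinf[OF s, of 0] by linarith
qed

lemma Vinf_approx:
  assumes "0 < \<epsilon>" shows "\<exists>K. \<forall>s\<in>S. Vinf s \<le> V K s + \<epsilon>"
proof -
  have "\<forall>s\<in>S. \<exists>k. Vinf s - \<epsilon> < V k s"
  proof
    fix s assume s: "s \<in> S"
    have "Vinf s - \<epsilon> < Vinf s" using assms by simp
    then show "\<exists>k. Vinf s - \<epsilon> < V k s" unfolding Vinf_def[of s] using less_cSUP_iff[OF _ V_bdd[OF s]] by blast
  qed
  then obtain f where f: "\<forall>s\<in>S. Vinf s - \<epsilon> < V (f s) s" by metis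
  have "\<forall>s\<in>S. Vinf s \<le> V (sum f S) s + \<epsilon>"
  proof
    fix s assume s: "s \<in> S"
    have "f s \<le> sum f S" using s finS by (intro member_le_sum) auto
    then have "V (f s) s \<le> V (sum f S) s" by (rule V_mono_le[OF s])
    then show "Vinf s \<le> V (sum f S) s + \<epsilon>" using f s by fastforce
  qed
  then show ?thesis by blast
qed

lemma Vinf_fix:
  assumes s: "s \<in> S" "s \<notin> T" shows "Phi Vinf s \<le> Vinf s"
proof (rule field_le_epsilon)
  fix e :: real assume "0 < e"
  then obtain K where K: "\<forall>s\<in>S. Vinf s \<le> V K s + e" using Vinf_approx by blast
  have "Phi Vinf s \<le> Phi (V K) s + e" by (rule Phi_shift[OF s(1) V_bnd K])
  also have "\<dots> = V (Suc K) s + e" using s by simp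
  also have "\<dots> \<le> Vinf s + e" using V_le_Vinf[OF s(1), of "Suc K"] by linarith
  finally show "Phi Vinf s \<le> Vinf s + e" .
qed

lemma Vinf_T: "s \<in> T \<Longrightarrow> Vinf s = 1"
proof -
  assume s: "s \<in> T"
  then have "s \<in> S" using TsubS by blast
  then have "V 0 s \<le> Vinf s" "Vinf s \<le> 1" using V_le_Vinf[of s 0] Vinf_bnd unfolding bnd_def by auto
  then show ?thesis using s by simp
qed

definition beta :: "'s list \<Rightarrow> 'a" where
  "beta h = (SOME b. b \<in> Av Opp (last h) \<and> M Vinf h = E Vinf h b)"

lemma beta: assumes "h \<in> histories S" shows "beta h \<in> Av Opp (last h) \<and> M Vinf h = E Vinf h (beta h)"
proof -
  have "\<exists>b. b \<in> Av Opp (last h) \<and> M Vinf h = E Vinf h b" using M_facts(2)[OF assms, where w=Vinf] by blast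
  then show ?thesis unfolding beta_def by (rule someI_ex)
qed

lemma greedy_strategy: "strategy S Av Opp (\<lambda>h. return_pmf (beta h))"
  unfolding strategy_def
proof
  fix h assume "h \<in> histories S"
  then show "set_pmf (return_pmf (beta h)) \<subseteq> Av Opp (last h)" using beta by simp
qed

lemma greedy_R:
  assumes "h \<in> histories S"
  shows "reach_within Sig S Av \<delta> T (combine Opp \<sigma> (\<lambda>h. return_pmf (beta h))) k h \<le> Vinf (last h)"
  using assms
proof (induction k arbitrary: h)
  case 0
  have "0 \<le> Vinf (last h)" using Vinf_bnd hist_last[OF 0] unfolding bnd_def by blast
  then show ?case using Vinf_T by simp
next
  case (Suc k)
  let ?\<rho> = "combine Opp \<sigma> (\<lambda>h. return_pmf (beta h))"
  let ?\<rho>' = "combine Opp \<sigma> (\<lambda>_. return_pmf (beta h))"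
  have l: "last h \<in> S" using hist_last[OF Suc.prems] .
  show ?case
  proof (cases "last h \<in> T")
    case True then show ?thesis using Vinf_T by simp
  next
    case False
    have "(\<Sum>s'\<in>S. next_prob Sig Av \<delta> ?\<rho> h s' * reach_within Sig S Av \<delta> T ?\<rho> k (h @ [s']))
        \<le> (\<Sum>s'\<in>S. next_prob Sig Av \<delta> ?\<rho> h s' * Vinf s')"
      using Suc.IH[OF hist_snoc[OF Suc.prems]] np_nonneg
      by (intro sum_mono mult_left_mono) auto
    also have "\<dots> = (\<Sum>s'\<in>S. next_prob Sig Av \<delta> ?\<rho>' h s' * Vinf s')"
      by (intro sum.cong refl arg_cong2[where f="(*)"] np_cong) (auto simp: combine_def)
    also have "\<dots> = E Vinf h (beta h)" unfolding E_def by simp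
    also have "\<dots> = M Vinf h" using beta[OF Suc.prems] by simp
    also have "\<dots> \<le> Phi Vinf (last h)" using Phi_upper[OF Vinf_bnd] Suc.prems by (simp add: Hs_def)
    also have "\<dots> \<le> Vinf (last h)" using Vinf_fix[OF l False] .
    finally show ?thesis using False by simp
  qed
qed

lemma stage1:
  assumes s0: "s0 \<in> S"
    and hyp: "\<forall>\<sigma>Opp. strategy S Av Opp \<sigma>Opp \<longrightarrow> reach_prob Sig S Av \<delta> T (combine Opp \<sigma> \<sigma>Opp) s0 > t"
  shows "\<exists>n. t < V n s0"
proof -
  have "t < reach_prob Sig S Av \<delta> T (combine Opp \<sigma> (\<lambda>h. return_pmf (beta h))) s0"
    using hyp[rule_format, OF greedy_strategy] .
  also have "\<dots> \<le> Vinf s0"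
    unfolding reach_prob_def using greedy_R[of "[s0]"] s0
    by (intro cSUP_least) (auto simp: histories_def)
  finally have "t < Vinf s0" .
  then show ?thesis unfolding Vinf_def using less_cSUP_iff[OF _ V_bdd[OF s0]] by blast
qed


primrec U :: "real \<Rightarrow> nat \<Rightarrow> 's \<Rightarrow> real" where
  "U lam 0 s = (if s \<in> T then 1 else 0)"
| "U lam (Suc m) s = (if s \<in> T then 1 else (1 - lam) * Phi (U lam m) s)"

lemma U_bnd:
  assumes "0 \<le> lam" "lam \<le> 1" shows "bnd (U lam m)"
proof (induction m)
  case 0 then show ?case by (simp add: bnd_def)
next
  case (Suc m)
  show ?case unfolding bnd_def
  proof
    fix s assume s: "s \<in> S"
    have p: "0 \<le> Phi (U lam m) s" "Phi (U lam m) s \<le> 1" using Phi_bnd[OF s Suc.IH] by auto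
    have "(1 - lam) * Phi (U lam m) s \<le> 1 * 1" using p assms by (intro mult_mono) auto
    moreover have "0 \<le> (1 - lam) * Phi (U lam m) s" using p assms by simp
    ultimately show "0 \<le> U lam (Suc m) s \<and> U lam (Suc m) s \<le> 1" by simp
  qed
qed

lemma U_mono:
  assumes "0 \<le> lam" "lam \<le> 1" shows "\<forall>s\<in>S. U lam m s \<le> U lam (Suc m) s"
proof (induction m)
  case 0 then show ?case using Phi_bnd[OF _ U_bnd[OF assms, of 0]] assms by simp
next
  case (Suc m)
  show ?case
  proof
    fix s assume s: "s \<in> S"
    have "Phi (U lam m) s \<le> Phi (U lam (Suc m)) s"
      using Phi_shift[OF s U_bnd[OF assms, of "Suc m"], of "U lam m" 0] Suc.IH by simp
    then have "(1 - lam) * Phi (U lam m) s \<le> (1 - lam) * Phi (U lam (Suc m)) s"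
      using assms by (intro mult_left_mono) auto
    then show "U lam (Suc m) s \<le> U lam (Suc (Suc m)) s" by simp
  qed
qed

lemma U_V:
  assumes "0 \<le> lam" "lam \<le> 1" shows "\<forall>s\<in>S. V m s \<le> U lam m s + real m * lam"
proof (induction m)
  case 0 then show ?case by simp
next
  case (Suc m)
  show ?case
  proof
    fix s assume s: "s \<in> S"
    show "V (Suc m) s \<le> U lam (Suc m) s + real (Suc m) * lam"
    proof (cases "s \<in> T")
      case True then show ?thesis using assms by simp
    next
      case False
      have a: "Phi (V m) s \<le> Phi (U lam m) s + real m * lam"
        by (rule Phi_shift[OF s U_bnd[OF assms] Suc.IH])
      have "Phi (U lam m) s \<le> 1" using Phi_bnd[OF s U_bnd[OF assms]] by auto
      then have "lam * Phi (U lam m) s \<le> lam" using assms by (simp add: mult_left_le)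
      then show ?thesis using a False by (simp add: algebra_simps)
    qed
  qed
qed

lemma U_mono_le: "0 \<le> lam \<Longrightarrow> lam \<le> 1 \<Longrightarrow> s \<in> S \<Longrightarrow> m \<le> m' \<Longrightarrow> U lam m s \<le> U lam m' s"
  using lift_Suc_mono_le[of "\<lambda>k. U lam k s"] U_mono by blast

definition hs :: "real \<Rightarrow> nat \<Rightarrow> real \<Rightarrow> 's \<Rightarrow> 's list" where
  "hs lam n \<eta> s = (if s \<in> S - T then (SOME h. h \<in> Hs s \<and> Phi (U lam n) s - \<eta> < M (U lam n) h) else [s])"

lemma hs:
  assumes "s \<in> S" "0 \<le> lam" "lam \<le> 1" "0 < \<eta>"
  shows "hs lam n \<eta> s \<in> Hs s \<and> (s \<notin> T \<longrightarrow> Phi (U lam n) s - \<eta> < M (U lam n) (hs lam n \<eta> s))"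
proof (cases "s \<in> T")
  case True then show ?thesis using Hs_ne[OF assms(1)] by (simp add: hs_def)
next
  case False
  have "\<exists>h. h \<in> Hs s \<and> Phi (U lam n) s - \<eta> < M (U lam n) h"
    using Phi_approx[OF assms(1) U_bnd[OF assms(2,3)] assms(4)] by blast
  then have "hs lam n \<eta> s \<in> Hs s \<and> Phi (U lam n) s - \<eta> < M (U lam n) (hs lam n \<eta> s)"
    unfolding hs_def using False assms(1) someI_ex[OF \<open>\<exists>h. _\<close>] by simp
  then show ?thesis by blast
qed

definition tau :: "real \<Rightarrow> nat \<Rightarrow> real \<Rightarrow> 'p \<Rightarrow> 's list \<Rightarrow> 'a pmf" where
  "tau lam n \<eta> p h = \<sigma> p (hs lam n \<eta> (last h))"

lemma tau_cs:
  assumes "0 \<le> lam" "lam \<le> 1" "0 < \<eta>"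
  shows "collective_strategy S Av Team (tau lam n \<eta>)"
  unfolding collective_strategy_def strategy_def
proof (intro ballI)
  fix p h assume p: "p \<in> Team" and h: "h \<in> histories S"
  have g: "hs lam n \<eta> (last h) \<in> Hs (last h)" using hs[OF hist_last[OF h] assms] by blast
  then have "set_pmf (\<sigma> p (hs lam n \<eta> (last h))) \<subseteq> Av p (last (hs lam n \<eta> (last h)))"
    using cs p Hs_hist[OF g] unfolding collective_strategy_def strategy_def by blast
  then show "set_pmf (tau lam n \<eta> p h) \<subseteq> Av p (last h)" using Hs_last[OF g] by (simp add: tau_def)
qed

lemma tau_ml: "memoryless_collective S Team (tau lam n \<eta>)"
  unfolding memoryless_collective_def memoryless_def tau_def by simp

lemma tau_valid:
  assumes "0 \<le> lam" "lam \<le> 1" "0 < \<eta>" "strategy S Av Opp \<sigma>O" "h \<in> histories S"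
  shows "valid (combine Opp (tau lam n \<eta>) \<sigma>O) h"
  using assms(4,5) tau_cs[OF assms(1-3), of n] SigTeam
  unfolding valid_def combine_def collective_strategy_def strategy_def by auto

lemma tau_step:
  assumes "0 \<le> lam" "lam \<le> 1" "0 < \<eta>" "strategy S Av Opp \<sigma>O" "h \<in> histories S" "last h \<notin> T"
  shows "U lam n (last h) - \<eta> \<le> (1 - lam) * (\<Sum>s'\<in>S. next_prob Sig Av \<delta> (combine Opp (tau lam n \<eta>) \<sigma>O) h s' * U lam n s')"
proof -
  let ?s = "last h"
  let ?g = "hs lam n \<eta> ?s"
  let ?u = "U lam n"
  have s: "?s \<in> S" using hist_last[OF assms(5)] .
  have gH: "?g \<in> Hs ?s" and gM: "Phi ?u ?s - \<eta> < M ?u ?g" using hs[OF s assms(1-3), of n] assms(6) by auto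
  have g: "?g \<in> histories S" "last ?g = ?s" using Hs_hist[OF gH] Hs_last[OF gH] by auto
  have sO: "set_pmf (\<sigma>O h) \<subseteq> Av Opp ?s" using assms(4,5) unfolding strategy_def by blast
  have "(\<Sum>s'\<in>S. next_prob Sig Av \<delta> (combine Opp (tau lam n \<eta>) \<sigma>O) h s' * ?u s')
     = (\<Sum>s'\<in>S. \<Sum>b\<in>Av Opp ?s. pmf (\<sigma>O h) b * next_prob Sig Av \<delta> (combine Opp (tau lam n \<eta>) (\<lambda>_. return_pmf b)) h s' * ?u s')"
    by (simp add: np_mix[of \<sigma>O h, OF sO s] sum_distrib_right)
  also have "\<dots> = (\<Sum>b\<in>Av Opp ?s. pmf (\<sigma>O h) b * (\<Sum>s'\<in>S. next_prob Sig Av \<delta> (combine Opp (tau lam n \<eta>) (\<lambda>_. return_pmf b)) h s' * ?u s'))"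
    by (subst sum.swap) (simp add: sum_distrib_left mult.assoc)
  also have "\<dots> = (\<Sum>b\<in>Av Opp ?s. pmf (\<sigma>O h) b * E ?u ?g b)"
    unfolding E_def
    by (intro sum.cong refl arg_cong2[where f="(*)"] np_cong) (auto simp: combine_def tau_def g(2))
  finally have eq: "(\<Sum>s'\<in>S. next_prob Sig Av \<delta> (combine Opp (tau lam n \<eta>) \<sigma>O) h s' * ?u s') = (\<Sum>b\<in>Av Opp ?s. pmf (\<sigma>O h) b * E ?u ?g b)" .
  have "?u ?s \<le> U lam (Suc n) ?s" using U_mono[OF assms(1,2)] s by blast
  also have "\<dots> = (1 - lam) * Phi ?u ?s" using assms(6) by simp
  finally have us: "?u ?s \<le> (1 - lam) * Phi ?u ?s" .
  have each: "?u ?s - \<eta> \<le> (1 - lam) * E ?u ?g b" if b: "b \<in> Av Opp ?s" for b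
  proof -
    have "M ?u ?g \<le> E ?u ?g b" using M_facts(1)[OF g(1)] b g(2) by simp
    then have "Phi ?u ?s - \<eta> \<le> E ?u ?g b" using gM by simp
    then have "(1 - lam) * (Phi ?u ?s - \<eta>) \<le> (1 - lam) * E ?u ?g b" using assms(2) by (intro mult_left_mono) auto
    moreover have "(1 - lam) * \<eta> \<le> \<eta>" using assms(1,3) by (simp add: mult_left_le_one_le)
    ultimately show ?thesis using us by (simp add: algebra_simps)
  qed
  have "?u ?s - \<eta> = (\<Sum>b\<in>Av Opp ?s. pmf (\<sigma>O h) b * (?u ?s - \<eta>))"
    using sum_pmf_eq_1[OF finAv[OF OppSig s] sO] by (simp add: sum_distrib_right[symmetric])
  also have "\<dots> \<le> (\<Sum>b\<in>Av Opp ?s. pmf (\<sigma>O h) b * ((1 - lam) * E ?u ?g b))"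
    using each by (intro sum_mono mult_left_mono) auto
  also have "\<dots> = (1 - lam) * (\<Sum>b\<in>Av Opp ?s. pmf (\<sigma>O h) b * E ?u ?g b)"
    by (simp add: sum_distrib_left algebra_simps)
  finally show ?thesis using eq by simp
qed

end

context gm begin

primrec Dsc :: "('p \<Rightarrow> 's list \<Rightarrow> 'a pmf) \<Rightarrow> real \<Rightarrow> nat \<Rightarrow> 's list \<Rightarrow> real" where
  "Dsc \<rho> lam 0 h = (if last h \<in> T then 1 else 0)"
| "Dsc \<rho> lam (Suc k) h = (if last h \<in> T then 1 else
     (1 - lam) * (\<Sum>s'\<in>S. next_prob Sig Av \<delta> \<rho> h s' * Dsc \<rho> lam k (h @ [s'])))"

lemma Dsc_R:
  assumes "0 \<le> lam" "lam \<le> 1" "h \<in> histories S"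
  shows "0 \<le> Dsc \<rho> lam k h \<and> Dsc \<rho> lam k h \<le> reach_within Sig S Av \<delta> T \<rho> k h"
  using assms(3)
proof (induction k arbitrary: h)
  case 0 then show ?case by simp
next
  case (Suc k)
  show ?case
  proof (cases "last h \<in> T")
    case True then show ?thesis by simp
  next
    case False
    let ?A = "\<Sum>s'\<in>S. next_prob Sig Av \<delta> \<rho> h s' * Dsc \<rho> lam k (h @ [s'])"
    have A0: "0 \<le> ?A" using Suc.IH[OF hist_snoc[OF Suc.prems]] np_nonneg by (intro sum_nonneg) simp
    have A1: "?A \<le> (\<Sum>s'\<in>S. next_prob Sig Av \<delta> \<rho> h s' * reach_within Sig S Av \<delta> T \<rho> k (h @ [s']))"
      using Suc.IH[OF hist_snoc[OF Suc.prems]] np_nonneg by (intro sum_mono mult_left_mono) auto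
    have "(1 - lam) * ?A \<le> ?A" using A0 assms(1,2) by (intro mult_left_le_one_le) auto
    moreover have "0 \<le> (1 - lam) * ?A" using A0 assms(2) by simp
    ultimately show ?thesis using A1 False by simp
  qed
qed

lemma Dsc_lower:
  assumes "0 < lam" "lam \<le> 1" "0 \<le> \<eta>" "\<forall>h\<in>histories S. valid \<rho> h" "\<forall>s\<in>S. u s \<le> 1"
    and step: "\<forall>h\<in>histories S. last h \<notin> T \<longrightarrow>
        u (last h) - \<eta> \<le> (1 - lam) * (\<Sum>s'\<in>S. next_prob Sig Av \<delta> \<rho> h s' * u s')"
    and "h \<in> histories S"
  shows "u (last h) - \<eta> / lam - (1 - lam) ^ k \<le> Dsc \<rho> lam k h"
  using assms(7)
proof (induction k arbitrary: h)
  case 0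
  have "u (last h) \<le> 1" using assms(5) hist_last[OF 0] by blast
  moreover have "0 \<le> \<eta> / lam" using assms(1,3) by simp
  ultimately show ?case by simp
next
  case (Suc k)
  have l: "last h \<in> S" using hist_last[OF Suc.prems] .
  have e0: "0 \<le> \<eta> / lam" using assms(1,3) by simp
  have pk: "0 \<le> (1 - lam) ^ k" using assms(2) by simp
  show ?case
  proof (cases "last h \<in> T")
    case True
    have "u (last h) \<le> 1" using assms(5) l by blast
    moreover have "0 \<le> (1 - lam) ^ Suc k" using assms(2) by simp
    ultimately show ?thesis using True e0 by simp
  next
    case False
    let ?c = "\<eta> / lam + (1 - lam) ^ k"
    let ?np = "next_prob Sig Av \<delta> \<rho> h"
    have sn: "(\<Sum>s'\<in>S. ?np s') = 1" using np_sum[OF l] assms(4) Suc.prems by blast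
    have "(\<Sum>s'\<in>S. ?np s' * u s') - ?c = (\<Sum>s'\<in>S. ?np s' * u s') - ?c * (\<Sum>s'\<in>S. ?np s')"
      using sn by simp
    also have "\<dots> = (\<Sum>s'\<in>S. ?np s' * (u s' - ?c))"
      by (simp add: sum_distrib_left sum_subtractf sum.distrib algebra_simps)
    also have "\<dots> \<le> (\<Sum>s'\<in>S. ?np s' * Dsc \<rho> lam k (h @ [s']))"
      using Suc.IH[OF hist_snoc[OF Suc.prems]] np_nonneg by (intro sum_mono mult_left_mono) (auto simp: diff_diff_eq)
    finally have a: "(\<Sum>s'\<in>S. ?np s' * u s') - ?c \<le> (\<Sum>s'\<in>S. ?np s' * Dsc \<rho> lam k (h @ [s']))" .
    have b: "(1 - lam) * ((\<Sum>s'\<in>S. ?np s' * u s') - ?c) \<le> (1 - lam) * (\<Sum>s'\<in>S. ?np s' * Dsc \<rho> lam k (h @ [s']))"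
      using a assms(2) by (intro mult_left_mono) auto
    have c: "u (last h) - \<eta> \<le> (1 - lam) * (\<Sum>s'\<in>S. ?np s' * u s')" using step Suc.prems False by blast
    have d: "(1 - lam) * (\<eta> / lam) = \<eta> / lam - \<eta>" using assms(1) by (simp add: field_simps)
    have "u (last h) - \<eta> / lam - (1 - lam) ^ Suc k = u (last h) - \<eta> - (1 - lam) * ?c"
      using d by (simp add: algebra_simps)
    also have "\<dots> \<le> (1 - lam) * ((\<Sum>s'\<in>S. ?np s' * u s') - ?c)"
      using c by (simp add: algebra_simps)
    also have "\<dots> \<le> Dsc \<rho> lam (Suc k) h" using b False by simp
    finally show ?thesis .
  qed
qed

end

lemma arith_aux:
  fixes V U x y z D R P t :: real
  shows "t < V \<Longrightarrow> V \<le> U + x \<Longrightarrow> U - y - z \<le> D \<Longrightarrow> D \<le> R \<Longrightarrow> R \<le> P \<Longrightarrow> x \<le> (V - t) / 4 \<Longrightarrow>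
    y = (V - t) / 4 \<Longrightarrow> z < (V - t) / 4 \<Longrightarrow> t < P"
  by (simp add: field_simps)

context gm2 begin

lemma stage2:
  assumes s0: "s0 \<in> S" and tV: "t < V n s0" and t0: "0 \<le> t"
  shows "\<exists>\<tau>. collective_strategy S Av Team \<tau> \<and> memoryless_collective S Team \<tau> \<and>
           (\<forall>\<sigma>Opp. strategy S Av Opp \<sigma>Opp \<longrightarrow> reach_prob Sig S Av \<delta> T (combine Opp \<tau> \<sigma>Opp) s0 > t)"
proof -
  define gap where "gap = V n s0 - t"
  have gap0: "0 < gap" using tV by (simp add: gap_def)
  have gap1: "gap \<le> 1" using V_bnd[of n] s0 t0 unfolding bnd_def gap_def by auto
  define lam where "lam = gap / (4 * (real n + 1))"
  define \<eta> where "\<eta> = lam * gap / 4"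
  have lam0: "0 < lam" using gap0 by (simp add: lam_def)
  have lam1: "lam \<le> 1" using gap1 gap0 unfolding lam_def by (simp add: field_simps)
  have eta0: "0 < \<eta>" using lam0 gap0 by (simp add: \<eta>_def)
  have nlam: "real n * lam \<le> gap / 4" unfolding lam_def using gap0 by (simp add: field_simps)
  have etalam: "\<eta> / lam = gap / 4" unfolding \<eta>_def using lam0 by simp
  obtain k where k: "(1 - lam) ^ k < gap / 4" using real_arch_pow_inv[of "gap/4" "1 - lam"] gap0 lam0 by auto
  show ?thesis
  proof (intro exI conjI allI impI)
    show "collective_strategy S Av Team (tau lam n \<eta>)" by (rule tau_cs[OF less_imp_le[OF lam0] lam1 eta0])
    show "memoryless_collective S Team (tau lam n \<eta>)" by (rule tau_ml)
    fix \<sigma>O assume sO: "strategy S Av Opp \<sigma>O"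
    let ?\<rho> = "combine Opp (tau lam n \<eta>) \<sigma>O"
    have val: "\<forall>h\<in>histories S. valid ?\<rho> h" using tau_valid[OF less_imp_le[OF lam0] lam1 eta0 sO] by blast
    have h0: "[s0] \<in> histories S" using s0 by (simp add: histories_def)
    have "V n s0 \<le> U lam n s0 + real n * lam" using U_V[OF less_imp_le[OF lam0] lam1] s0 by blast
    moreover have "U lam n s0 - \<eta> / lam - (1 - lam) ^ k \<le> Dsc ?\<rho> lam k [s0]"
      using Dsc_lower[OF lam0 lam1 less_imp_le[OF eta0] val _ _ h0, of "U lam n" k]
        U_bnd[OF less_imp_le[OF lam0] lam1, of n] tau_step[OF less_imp_le[OF lam0] lam1 eta0 sO]
      unfolding bnd_def by auto
    moreover have "Dsc ?\<rho> lam k [s0] \<le> reach_within Sig S Av \<delta> T ?\<rho> k [s0]"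
      using Dsc_R[OF less_imp_le[OF lam0] lam1 h0] by blast
    moreover have "reach_within Sig S Av \<delta> T ?\<rho> k [s0] \<le> reach_prob Sig S Av \<delta> T ?\<rho> s0"
      unfolding reach_prob_def
      by (rule cSUP_upper) (use R_bounds[OF val h0] in \<open>auto intro!: bdd_aboveI[of _ 1]\<close>)
    ultimately show "t < reach_prob Sig S Av \<delta> T ?\<rho> s0"
      using nlam etalam k unfolding gap_def by (intro arith_aux[OF tV])
  qed
qed

end

theorem theorem1:
  fixes Sig Team :: "'p set" and S T :: "'s set" and Av :: "'p \<Rightarrow> 's \<Rightarrow> 'a set"
    and \<delta> :: "'s \<Rightarrow> ('p \<Rightarrow> 'a) \<Rightarrow> 's pmf" and s0 :: 's and Opp :: 'p and t :: real
  assumes "game_structure Sig S Av \<delta>"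
    and "Team \<subseteq> Sig" and "Sig - Team = {Opp}"
    and "T \<subseteq> S" and "absorbing Sig Av \<delta> T" and "s0 \<in> S"
    and "t \<in> \<rat>" and "0 \<le> t" and "t \<le> 1"
    and "\<exists>\<sigma>. collective_strategy S Av Team \<sigma> \<and>
           (\<forall>\<sigma>Opp. strategy S Av Opp \<sigma>Opp \<longrightarrow> reach_prob Sig S Av \<delta> T (combine Opp \<sigma> \<sigma>Opp) s0 > t)"
  shows "\<exists>\<sigma>. collective_strategy S Av Team \<sigma> \<and> memoryless_collective S Team \<sigma> \<and>
           (\<forall>\<sigma>Opp. strategy S Av Opp \<sigma>Opp \<longrightarrow> reach_prob Sig S Av \<delta> T (combine Opp \<sigma> \<sigma>Opp) s0 > t)"
proof -
  obtain \<sigma> where cs: "collective_strategy S Av Team \<sigma>"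
    and hyp: "\<forall>\<sigma>Opp. strategy S Av Opp \<sigma>Opp \<longrightarrow> reach_prob Sig S Av \<delta> T (combine Opp \<sigma> \<sigma>Opp) s0 > t"
    using assms(10) by blast
  interpret gm2 Sig Team S T Av \<delta> Opp \<sigma>
    using assms(1-4) cs by unfold_locales auto
  obtain n where "t < V n s0" using stage1[OF assms(6) hyp] by blast
  then show ?thesis using stage2[OF assms(6) _ assms(8)] by blast
qed

end
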